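(* Let $P$ be an $n$-element poset with connected components $P_1,\ldots,P_r$, and let $n_i=|P_i|$. If for each $i$ the poset $P_i$ has at most $(n_i-1)!$ tangled labelings, then $P$ has at most $(n-r)(n-2)!$ tangled labelings.
   Context: A labeling of an $m$-element poset is a bijection to $[m]$; a linear extension is a labeling with $x<y\Rightarrow L(x)<L(y)$. Promotion $\partial$: for non-maximal $y$, the $L$-successor of $y$ is the element greater than $y$ with minimal label; the promotion chain is $v_1=L^{-1}(1)$, $v_{i+1}$ the $L$-successor of $v_i$, ending at the first maximal $v_p$; $\partial(L)(y)=L(y)-1$ off the chain, $\partial(L)(v_i)=L(v_{i+1})-1$ for $i<p$, $\partial(L)(v_p)=m$. The sorting time of $L$ is the least $k\ge0$ with $\partial^k(L)$ a linear extension; a labeling of an $m$-element poset is tangled if its sorting time is $m-1$. Connected components are those of the Hasse diagram. *)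

theory Defs
  imports Main
begin

text \<open>A finite poset is given by a finite carrier A and a strict order lt on A.
 Every notion below is taken relative to the carrier, so using a subset C of A
 as carrier yields the induced subposet.\<close>

definition strict_poset :: "'a set \<Rightarrow> ('a \<Rightarrow> 'a \<Rightarrow> bool) \<Rightarrow> bool" where
  "strict_poset A lt \<longleftrightarrow> finite A \<and> (\<forall>x\<in>A. \<not> lt x x) \<and>
     (\<forall>x\<in>A. \<forall>y\<in>A. \<forall>z\<in>A. lt x y \<longrightarrow> lt y z \<longrightarrow> lt x z)"

definition labelings :: "'a set \<Rightarrow> ('a \<Rightarrow> nat) set" where
  "labelings A = {L. bij_betw L A {1..card A} \<and> (\<forall>x. x \<notin> A \<longrightarrow> L x = 0)}"

definition is_linext :: "'a set \<Rightarrow> ('a \<Rightarrow> 'a \<Rightarrow> bool) \<Rightarrow> ('a \<Rightarrow> nat) \<Rightarrow> bool" where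
  "is_linext A lt L \<longleftrightarrow> (\<forall>x\<in>A. \<forall>y\<in>A. lt x y \<longrightarrow> L x < L y)"

definition is_maximal :: "'a set \<Rightarrow> ('a \<Rightarrow> 'a \<Rightarrow> bool) \<Rightarrow> 'a \<Rightarrow> bool" where
  "is_maximal A lt y \<longleftrightarrow> y \<in> A \<and> \<not> (\<exists>z\<in>A. lt y z)"

definition lsucc :: "'a set \<Rightarrow> ('a \<Rightarrow> 'a \<Rightarrow> bool) \<Rightarrow> ('a \<Rightarrow> nat) \<Rightarrow> 'a \<Rightarrow> 'a" where
  "lsucc A lt L y = (ARG_MIN L z. z \<in> A \<and> lt y z)"

definition chain_start :: "'a set \<Rightarrow> ('a \<Rightarrow> nat) \<Rightarrow> 'a" where
  "chain_start A L = (THE x. x \<in> A \<and> L x = 1)"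

definition promo_chain :: "'a set \<Rightarrow> ('a \<Rightarrow> 'a \<Rightarrow> bool) \<Rightarrow> ('a \<Rightarrow> nat) \<Rightarrow> 'a set" where
  "promo_chain A lt L = {v. \<exists>k. v = (lsucc A lt L ^^ k) (chain_start A L) \<and>
      (\<forall>j<k. \<not> is_maximal A lt ((lsucc A lt L ^^ j) (chain_start A L)))}"

definition promotion :: "'a set \<Rightarrow> ('a \<Rightarrow> 'a \<Rightarrow> bool) \<Rightarrow> ('a \<Rightarrow> nat) \<Rightarrow> ('a \<Rightarrow> nat)" where
  "promotion A lt L = (\<lambda>y.
     if y \<notin> A then 0
     else if y \<in> promo_chain A lt L then
       (if is_maximal A lt y then card A else L (lsucc A lt L y) - 1)
     else L y - 1)"

definition sorting_time :: "'a set \<Rightarrow> ('a \<Rightarrow> 'a \<Rightarrow> bool) \<Rightarrow> ('a \<Rightarrow> nat) \<Rightarrow> nat" where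
  "sorting_time A lt L = (LEAST k. is_linext A lt ((promotion A lt ^^ k) L))"

text \<open>Tangled: sorting time equals m-1 (stated as: m-1 is the least such k).\<close>
definition tangled :: "'a set \<Rightarrow> ('a \<Rightarrow> 'a \<Rightarrow> bool) \<Rightarrow> ('a \<Rightarrow> nat) \<Rightarrow> bool" where
  "tangled A lt L \<longleftrightarrow> is_linext A lt ((promotion A lt ^^ (card A - 1)) L) \<and>
     (\<forall>k < card A - 1. \<not> is_linext A lt ((promotion A lt ^^ k) L))"

definition tangled_labelings :: "'a set \<Rightarrow> ('a \<Rightarrow> 'a \<Rightarrow> bool) \<Rightarrow> ('a \<Rightarrow> nat) set" where
  "tangled_labelings A lt = {L \<in> labelings A. tangled A lt L}"

definition covers :: "'a set \<Rightarrow> ('a \<Rightarrow> 'a \<Rightarrow> bool) \<Rightarrow> ('a \<times> 'a) set" where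
  "covers A lt = {(x, y). x \<in> A \<and> y \<in> A \<and> lt x y \<and> \<not> (\<exists>z\<in>A. lt x z \<and> lt z y)}"

definition hasse_connected :: "'a set \<Rightarrow> ('a \<Rightarrow> 'a \<Rightarrow> bool) \<Rightarrow> ('a \<times> 'a) set" where
  "hasse_connected A lt = Id_on A \<union> (covers A lt \<union> (covers A lt)\<inverse>)\<^sup>+"

definition components :: "'a set \<Rightarrow> ('a \<Rightarrow> 'a \<Rightarrow> bool) \<Rightarrow> 'a set set" where
  "components A lt = A // hasse_connected A lt"

end

theory Submission
  imports Defs "HOL-Library.FuncSet"
begin


definition vv :: "'a set \<Rightarrow> ('a \<Rightarrow> 'a \<Rightarrow> bool) \<Rightarrow> ('a \<Rightarrow> nat) \<Rightarrow> nat \<Rightarrow> 'a" where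
  "vv A lt L k = (lsucc A lt L ^^ k) (chain_start A L)"

definition okk :: "'a set \<Rightarrow> ('a \<Rightarrow> 'a \<Rightarrow> bool) \<Rightarrow> ('a \<Rightarrow> nat) \<Rightarrow> nat \<Rightarrow> bool" where
  "okk A lt L k = (\<forall>j<k. \<not> is_maximal A lt (vv A lt L j))"

definition Qp :: "'a set \<Rightarrow> ('a \<Rightarrow> 'a \<Rightarrow> bool) \<Rightarrow> nat \<Rightarrow> ('a \<Rightarrow> nat) \<Rightarrow> bool" where
  "Qp A lt t M = (\<forall>x\<in>A. \<forall>y\<in>A. lt x y \<longrightarrow> t \<le> M x \<longrightarrow> M x < M y)"

lemma promo_chain_alt: "promo_chain A lt L = {v. \<exists>k. v = vv A lt L k \<and> okk A lt L k}"
  unfolding promo_chain_def vv_def okk_def by simp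

lemma okk_Suc: "okk A lt L (Suc k) = (okk A lt L k \<and> \<not> is_maximal A lt (vv A lt L k))"
  unfolding okk_def by (auto simp: less_Suc_eq)

lemma vv_Suc: "vv A lt L (Suc k) = lsucc A lt L (vv A lt L k)"
  unfolding vv_def by simp

lemma vv_0: "vv A lt L 0 = chain_start A L"
  unfolding vv_def by simp

lemma lab_facts:
  assumes "L \<in> labelings A"
  shows "inj_on L A" "L ` A = {1..card A}" "\<And>x. x \<notin> A \<Longrightarrow> L x = 0"
  using assms unfolding labelings_def bij_betw_def by auto

lemma lab_range:
  assumes "L \<in> labelings A" "x \<in> A"
  shows "1 \<le> L x" "L x \<le> card A"
  using lab_facts(2)[OF assms(1)] assms(2) by auto

lemma bij_by_card:
  assumes "finite A" "inj_on f A" "f ` A \<subseteq> {1..card A}"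
  shows "bij_betw f A {1..card A}"
proof -
  have "card (f ` A) = card {1..card A}" using assms card_image by fastforce
  then have "f ` A = {1..card A}" using assms card_subset_eq by (metis finite_atLeastAtMost)
  then show ?thesis using assms unfolding bij_betw_def by auto
qed

lemma argmin_unique:
  fixes f :: "'a \<Rightarrow> nat"
  assumes "P z0" "\<forall>w. P w \<longrightarrow> f z0 \<le> f w" "inj_on f {w. P w}"
  shows "(ARG_MIN f z. P z) = z0"
proof -
  have "P (ARG_MIN f z. P z)" "f (ARG_MIN f z. P z) \<le> f z0"
    using arg_min_nat_lemma[of P z0 f] assms by auto
  then have "f (ARG_MIN f z. P z) = f z0" using assms by force
  then show ?thesis using assms \<open>P (ARG_MIN f z. P z)\<close> by (auto dest: inj_onD)
qed

context
  fixes A :: "'a set" and lt :: "'a \<Rightarrow> 'a \<Rightarrow> bool" and L :: "'a \<Rightarrow> nat"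
  assumes po: "strict_poset A lt" and lab: "L \<in> labelings A" and ne: "A \<noteq> {}"
begin

lemma finA: "finite A" using po unfolding strict_poset_def by auto
lemma irr: "x \<in> A \<Longrightarrow> \<not> lt x x" using po unfolding strict_poset_def by auto
lemma trn: "x \<in> A \<Longrightarrow> y \<in> A \<Longrightarrow> z \<in> A \<Longrightarrow> lt x y \<Longrightarrow> lt y z \<Longrightarrow> lt x z"
  using po unfolding strict_poset_def by blast

lemma injL: "inj_on L A" using lab_facts[OF lab] by auto

lemma start_facts: "chain_start A L \<in> A" "L (chain_start A L) = 1"
proof -
  have "card A \<ge> 1" using finA ne by (simp add: Suc_le_eq card_gt_0_iff)
  then have "1 \<in> L ` A" using lab_facts(2)[OF lab] by auto
  then obtain x where x: "x \<in> A" "L x = 1" by auto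
  have "\<exists>!x. x \<in> A \<and> L x = 1" using x injL by (metis inj_onD)
  then have "chain_start A L \<in> A \<and> L (chain_start A L) = 1"
    unfolding chain_start_def by (rule theI')
  then show "chain_start A L \<in> A" "L (chain_start A L) = 1" by auto
qed

lemma start_unique: "z \<in> A \<Longrightarrow> L z = 1 \<Longrightarrow> z = chain_start A L"
  using start_facts injL by (metis inj_onD)

lemma lsucc_prop:
  assumes "y \<in> A" "\<not> is_maximal A lt y"
  shows "lsucc A lt L y \<in> A" "lt y (lsucc A lt L y)"
    "\<And>z. z \<in> A \<Longrightarrow> lt y z \<Longrightarrow> L (lsucc A lt L y) \<le> L z"
proof -
  obtain z where z: "z \<in> A" "lt y z" using assms unfolding is_maximal_def by auto
  note h = arg_min_nat_lemma[of "\<lambda>z. z \<in> A \<and> lt y z" z L]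
  show "lsucc A lt L y \<in> A" "lt y (lsucc A lt L y)"
    "\<And>z. z \<in> A \<Longrightarrow> lt y z \<Longrightarrow> L (lsucc A lt L y) \<le> L z"
    using h z unfolding lsucc_def by auto
qed

lemma okk_le: "okk A lt L k \<Longrightarrow> i \<le> k \<Longrightarrow> okk A lt L i"
  unfolding okk_def by auto

lemma chain_in: "okk A lt L k \<Longrightarrow> vv A lt L k \<in> A"
proof (induction k)
  case 0
  then show ?case using start_facts by (simp add: vv_0)
next
  case (Suc k)
  then have ok: "okk A lt L k" and nm: "\<not> is_maximal A lt (vv A lt L k)" by (auto simp: okk_Suc)
  then show ?case using Suc.IH lsucc_prop(1) by (simp add: vv_Suc)
qed

lemma chain_mono: "okk A lt L k \<Longrightarrow> i < k \<Longrightarrow> lt (vv A lt L i) (vv A lt L k)"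
proof (induction k arbitrary: i)
  case 0
  then show ?case by simp
next
  case (Suc k)
  then have ok: "okk A lt L k" and nm: "\<not> is_maximal A lt (vv A lt L k)" by (auto simp: okk_Suc)
  have s: "lt (vv A lt L k) (vv A lt L (Suc k))"
    using lsucc_prop(2)[OF chain_in[OF ok] nm] by (simp add: vv_Suc)
  show ?case
  proof (cases "i = k")
    case True then show ?thesis using s by simp
  next
    case False
    then have "i < k" using Suc by auto
    then have "lt (vv A lt L i) (vv A lt L k)" using Suc.IH ok by auto
    moreover have "vv A lt L i \<in> A" using chain_in okk_le ok \<open>i < k\<close> by auto
    ultimately show ?thesis using s trn chain_in ok Suc.prems(1) by blast
  qed
qed

lemma chain_sub: "y \<in> promo_chain A lt L \<Longrightarrow> y \<in> A"
  using chain_in by (auto simp: promo_chain_alt)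

lemma start_in: "chain_start A L \<in> promo_chain A lt L"
  unfolding promo_chain_alt by (rule CollectI, rule exI[of _ 0]) (simp add: vv_0 okk_def)

lemma chain_succ: "y \<in> promo_chain A lt L \<Longrightarrow> \<not> is_maximal A lt y \<Longrightarrow> lsucc A lt L y \<in> promo_chain A lt L"
proof -
  assume a: "y \<in> promo_chain A lt L" "\<not> is_maximal A lt y"
  then obtain k where k: "y = vv A lt L k" "okk A lt L k" unfolding promo_chain_alt by auto
  then have "okk A lt L (Suc k)" "lsucc A lt L y = vv A lt L (Suc k)" using a by (auto simp: okk_Suc vv_Suc)
  then show ?thesis unfolding promo_chain_alt by blast
qed

lemma chain_above: "y \<in> promo_chain A lt L \<Longrightarrow> y = chain_start A L \<or> lt (chain_start A L) y"
proof -
  assume "y \<in> promo_chain A lt L"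
  then obtain k where k: "y = vv A lt L k" "okk A lt L k" unfolding promo_chain_alt by auto
  show ?thesis
  proof (cases k)
    case 0 then show ?thesis using k by (simp add: vv_0)
  next
    case (Suc m)
    then show ?thesis using chain_mono[OF k(2), of 0] k by (simp add: vv_0)
  qed
qed

lemma chain_pred:
  assumes "w \<in> promo_chain A lt L" "w \<noteq> chain_start A L"
  shows "\<exists>z\<in>promo_chain A lt L. \<not> is_maximal A lt z \<and> lsucc A lt L z = w"
proof -
  obtain k where k: "w = vv A lt L k" "okk A lt L k" using assms unfolding promo_chain_alt by auto
  then obtain m where m: "k = Suc m" using assms by (cases k) (auto simp: vv_0)
  then have "okk A lt L m" "\<not> is_maximal A lt (vv A lt L m)" using k by (auto simp: okk_Suc)
  then show ?thesis using k m unfolding promo_chain_alt by (auto simp: vv_Suc)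
qed

lemma chain_max_unique:
  assumes "y1 \<in> promo_chain A lt L" "y2 \<in> promo_chain A lt L" "is_maximal A lt y1" "is_maximal A lt y2"
  shows "y1 = y2"
proof -
  obtain i where i: "y1 = vv A lt L i" "okk A lt L i" using assms unfolding promo_chain_alt by auto
  obtain j where j: "y2 = vv A lt L j" "okk A lt L j" using assms unfolding promo_chain_alt by auto
  have "\<not> i < j" using i j assms unfolding okk_def by auto
  moreover have "\<not> j < i" using i j assms unfolding okk_def by auto
  ultimately show ?thesis using i j by auto
qed

lemma chain_succ_inj:
  assumes "y1 \<in> promo_chain A lt L" "y2 \<in> promo_chain A lt L" "\<not> is_maximal A lt y1" "\<not> is_maximal A lt y2"
    "lsucc A lt L y1 = lsucc A lt L y2"
  shows "y1 = y2"
proof -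
  obtain i where i: "y1 = vv A lt L i" "okk A lt L i" using assms unfolding promo_chain_alt by auto
  obtain j where j: "y2 = vv A lt L j" "okk A lt L j" using assms unfolding promo_chain_alt by auto
  have oi: "okk A lt L (Suc i)" and oj: "okk A lt L (Suc j)" using i j assms by (auto simp: okk_Suc)
  have e: "vv A lt L (Suc i) = vv A lt L (Suc j)" using assms i j by (simp add: vv_Suc)
  have "\<not> i < j" using chain_mono[OF oj, of "Suc i"] e irr chain_in[OF oj] by auto
  moreover have "\<not> j < i" using chain_mono[OF oi, of "Suc j"] e irr chain_in[OF oi] by auto
  ultimately show ?thesis using i j by auto
qed

lemma lsucc_ne_start:
  assumes "y \<in> promo_chain A lt L" "\<not> is_maximal A lt y"
  shows "lsucc A lt L y \<noteq> chain_start A L"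
proof -
  obtain i where i: "y = vv A lt L i" "okk A lt L i" using assms unfolding promo_chain_alt by auto
  have oi: "okk A lt L (Suc i)" using i assms by (auto simp: okk_Suc)
  show ?thesis using chain_mono[OF oi, of 0] irr chain_in[OF oi] i by (auto simp: vv_0 vv_Suc)
qed

lemma pv_max: "y \<in> promo_chain A lt L \<Longrightarrow> is_maximal A lt y \<Longrightarrow> promotion A lt L y = card A"
  using chain_sub unfolding promotion_def by auto
lemma pv_succ: "y \<in> promo_chain A lt L \<Longrightarrow> \<not> is_maximal A lt y \<Longrightarrow> promotion A lt L y = L (lsucc A lt L y) - 1"
  using chain_sub unfolding promotion_def by auto
lemma pv_off: "y \<in> A \<Longrightarrow> y \<notin> promo_chain A lt L \<Longrightarrow> promotion A lt L y = L y - 1"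
  unfolding promotion_def by auto

lemma promotion_lab: "promotion A lt L \<in> labelings A"
proof -
  let ?P = "promo_chain A lt L" and ?s = "chain_start A L" and ?n = "card A"
  define sig where "sig y = (if y \<in> ?P then lsucc A lt L y else y)" for y
  have sigA: "sig y \<in> A" "sig y \<noteq> ?s" if "y \<in> A" "\<not> (y \<in> ?P \<and> is_maximal A lt y)" for y
  proof -
    show "sig y \<in> A" using that lsucc_prop(1) unfolding sig_def by auto
    show "sig y \<noteq> ?s" using that lsucc_ne_start start_in unfolding sig_def by auto
  qed
  have pvs: "promotion A lt L y = L (sig y) - 1" if "y \<in> A" "\<not> (y \<in> ?P \<and> is_maximal A lt y)" for y
    using that pv_succ pv_off unfolding sig_def by auto
  have Lsig: "2 \<le> L (sig y)" "L (sig y) \<le> ?n" if "y \<in> A" "\<not> (y \<in> ?P \<and> is_maximal A lt y)" for y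
  proof -
    have "1 \<le> L (sig y)" "L (sig y) \<le> ?n" "L (sig y) \<noteq> 1"
      using sigA[OF that] lab_range[OF lab] start_unique by auto
    then show "2 \<le> L (sig y)" "L (sig y) \<le> ?n" by auto
  qed
  have n1: "?n \<ge> 1" using finA ne by (simp add: Suc_le_eq card_gt_0_iff)
  have rng: "promotion A lt L ` A \<subseteq> {1..?n}"
  proof
    fix u assume "u \<in> promotion A lt L ` A"
    then obtain y where y: "y \<in> A" "u = promotion A lt L y" by auto
    show "u \<in> {1..?n}"
    proof (cases "y \<in> ?P \<and> is_maximal A lt y")
      case True then show ?thesis using pv_max y n1 by auto
    next
      case False then show ?thesis using pvs[OF y(1) False] Lsig[OF y(1) False] y by auto
    qed
  qed
  have sig_inj: "y1 = y2" if "y1 \<in> A" "\<not> (y1 \<in> ?P \<and> is_maximal A lt y1)" "y2 \<in> A"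
     "\<not> (y2 \<in> ?P \<and> is_maximal A lt y2)" "sig y1 = sig y2" for y1 y2
  proof -
    have c1: "y1 \<in> ?P \<Longrightarrow> sig y1 \<in> ?P" using that(1,2) chain_succ unfolding sig_def by auto
    have c2: "y2 \<in> ?P \<Longrightarrow> sig y2 \<in> ?P" using that(3,4) chain_succ unfolding sig_def by auto
    show ?thesis
    proof (cases "y1 \<in> ?P")
      case T1: True
      show ?thesis
      proof (cases "y2 \<in> ?P")
        case True
        then have "lsucc A lt L y1 = lsucc A lt L y2" using T1 that(5) unfolding sig_def by simp
        then show ?thesis using chain_succ_inj T1 True that by auto
      next
        case False
        then show ?thesis using c1[OF T1] that(5) unfolding sig_def by auto
      qed
    next
      case F1: False
      show ?thesis
      proof (cases "y2 \<in> ?P")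
        case True
        then show ?thesis using c2[OF True] F1 that(5) unfolding sig_def by auto
      next
        case False
        then show ?thesis using F1 that(5) unfolding sig_def by auto
      qed
    qed
  qed
  have inj: "inj_on (promotion A lt L) A"
  proof (rule inj_onI)
    fix y1 y2 assume y: "y1 \<in> A" "y2 \<in> A" "promotion A lt L y1 = promotion A lt L y2"
    show "y1 = y2"
    proof (cases "y1 \<in> ?P \<and> is_maximal A lt y1"; cases "y2 \<in> ?P \<and> is_maximal A lt y2")
      assume "y1 \<in> ?P \<and> is_maximal A lt y1" "y2 \<in> ?P \<and> is_maximal A lt y2"
      then show ?thesis using chain_max_unique by auto
    next
      assume a: "y1 \<in> ?P \<and> is_maximal A lt y1" "\<not> (y2 \<in> ?P \<and> is_maximal A lt y2)"
      then show ?thesis using pv_max[of y1] pvs[OF y(2) a(2)] Lsig[OF y(2) a(2)] y(3) by auto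
    next
      assume a: "\<not> (y1 \<in> ?P \<and> is_maximal A lt y1)" "y2 \<in> ?P \<and> is_maximal A lt y2"
      then show ?thesis using pv_max[of y2] pvs[OF y(1) a(1)] Lsig[OF y(1) a(1)] y(3) by auto
    next
      assume a: "\<not> (y1 \<in> ?P \<and> is_maximal A lt y1)" "\<not> (y2 \<in> ?P \<and> is_maximal A lt y2)"
      then have "L (sig y1) = L (sig y2)" using pvs[OF y(1) a(1)] pvs[OF y(2) a(2)] Lsig[OF y(1) a(1)] Lsig[OF y(2) a(2)] y(3) by auto
      then have "sig y1 = sig y2" using injL sigA a y by (meson inj_onD)
      then show ?thesis using sig_inj a y by auto
    qed
  qed
  have "bij_betw (promotion A lt L) A {1..?n}" using bij_by_card[OF finA inj rng] .
  then show ?thesis unfolding labelings_def promotion_def by auto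
qed

lemma Q_step:
  assumes Q: "Qp A lt t L"
  shows "Qp A lt (t - 1) (promotion A lt L)"
  unfolding Qp_def
proof (intro ballI impI)
  let ?P = "promo_chain A lt L" and ?pm = "promotion A lt L" and ?n = "card A"
  fix x y assume x: "x \<in> A" and y: "y \<in> A" and xy: "lt x y" and tx: "t - 1 \<le> ?pm x"
  have xnm: "\<not> is_maximal A lt x" using y xy unfolding is_maximal_def by auto
  have Qa: "\<And>a b. a \<in> A \<Longrightarrow> b \<in> A \<Longrightarrow> lt a b \<Longrightarrow> t \<le> L a \<Longrightarrow> L a < L b" using Q unfolding Qp_def by auto
  have rng: "\<And>a. a \<in> A \<Longrightarrow> 1 \<le> L a \<and> L a \<le> ?n" using lab_range[OF lab] by auto
  have ybig: "L y \<le> ?pm y + 1 \<and> ?pm y \<ge> L y - 1" if "t \<le> L y" "\<not> (y \<in> ?P \<and> is_maximal A lt y)"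
  proof (cases "y \<in> ?P")
    case True
    then have ynm: "\<not> is_maximal A lt y" using that by auto
    have "L y < L (lsucc A lt L y)" using Qa[OF y lsucc_prop(1)[OF y ynm] lsucc_prop(2)[OF y ynm] that(1)] .
    then show ?thesis using pv_succ[OF True ynm] by auto
  next
    case False then show ?thesis using pv_off[OF y False] rng[OF y] by auto
  qed
  have ymax: "?pm y = ?n" if "y \<in> ?P" "is_maximal A lt y" using pv_max that by auto
  show "?pm x < ?pm y"
  proof (cases "x \<in> ?P")
    case xc: True
    let ?u = "lsucc A lt L x"
    have uA: "?u \<in> A" and xu: "lt x ?u" and umin: "L ?u \<le> L y"
      using lsucc_prop[OF x xnm] y xy by auto
    have uc: "?u \<in> ?P" using chain_succ[OF xc xnm] .
    have px: "?pm x = L ?u - 1" using pv_succ[OF xc xnm] .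
    have tu: "t \<le> L ?u" using tx px rng[OF uA] by auto
    show ?thesis
    proof (cases "y = ?u")
      case True
      show ?thesis
      proof (cases "is_maximal A lt ?u")
        case True then show ?thesis using ymax uc \<open>y = ?u\<close> px rng[OF uA] by auto
      next
        case False
        have "L ?u < L (lsucc A lt L ?u)"
          using Qa[OF uA lsucc_prop(1)[OF uA False] lsucc_prop(2)[OF uA False] tu] .
        then show ?thesis using pv_succ[OF uc False] \<open>y = ?u\<close> px rng[OF uA] by auto
      qed
    next
      case False
      then have "L ?u \<noteq> L y" using injL uA y by (metis inj_onD)
      then have lt1: "L ?u < L y" using umin by auto
      show ?thesis
      proof (cases "y \<in> ?P \<and> is_maximal A lt y")
        case True then show ?thesis using ymax px rng[OF uA] by auto
      next
        case False then show ?thesis using ybig[OF _ False] lt1 tu px rng[OF uA] by auto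
      qed
    qed
  next
    case xo: False
    have px: "?pm x = L x - 1" using pv_off[OF x xo] .
    have tx2: "t \<le> L x" using tx px rng[OF x] by auto
    have lxy: "L x < L y" using Qa[OF x y xy tx2] .
    show ?thesis
    proof (cases "y \<in> ?P \<and> is_maximal A lt y")
      case True then show ?thesis using ymax px rng[OF x] by auto
    next
      case False then show ?thesis using ybig[OF _ False] lxy tx2 px rng[OF x] by auto
    qed
  qed
qed

end


lemma iter_lab: "strict_poset A lt \<Longrightarrow> L \<in> labelings A \<Longrightarrow> A \<noteq> {} \<Longrightarrow> (promotion A lt ^^ k) L \<in> labelings A"
  by (induction k) (auto intro: promotion_lab)

lemma iter_Q: "strict_poset A lt \<Longrightarrow> L \<in> labelings A \<Longrightarrow> A \<noteq> {} \<Longrightarrow> Qp A lt t L \<Longrightarrow>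
   Qp A lt (t - k) ((promotion A lt ^^ k) L)"
proof (induction k)
  case 0 then show ?case by simp
next
  case (Suc k)
  have "Qp A lt (t - k - 1) (promotion A lt ((promotion A lt ^^ k) L))"
  proof -
    have "Qp A lt (t - k) ((promotion A lt ^^ k) L)" using Suc by auto
    then show ?thesis using Q_step[OF Suc.prems(1) iter_lab[OF Suc.prems(1-3)] Suc.prems(3), of "t - k"] by simp
  qed
  then show ?case by simp
qed

lemma Q_triv: "L \<in> labelings A \<Longrightarrow> Qp A lt (card A + 1) L"
  unfolding Qp_def using lab_range by fastforce

lemma Q0: "Qp A lt 0 L = is_linext A lt L"
  unfolding Qp_def is_linext_def by auto

lemma Q2_linext:
  assumes "strict_poset A lt" "L \<in> labelings A" "Qp A lt 2 L"
  shows "is_linext A lt L"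
  unfolding is_linext_def
proof (intro ballI impI)
  fix x y assume xy: "x \<in> A" "y \<in> A" "lt x y"
  show "L x < L y"
  proof (cases "2 \<le> L x")
    case True then show ?thesis using assms(3) xy unfolding Qp_def by auto
  next
    case False
    then have "L x = 1" using lab_range[OF assms(2) xy(1)] by auto
    moreover have "x \<noteq> y" using xy assms(1) unfolding strict_poset_def by auto
    then have "L x \<noteq> L y" using lab_facts(1)[OF assms(2)] xy by (meson inj_onD)
    ultimately show ?thesis using lab_range[OF assms(2) xy(2)] by auto
  qed
qed

lemma sorting_thm:
  assumes "strict_poset A lt" "L \<in> labelings A" "A \<noteq> {}"
  shows "is_linext A lt ((promotion A lt ^^ (card A - 1)) L)"
proof -
  have "Qp A lt (card A + 1 - (card A - 1)) ((promotion A lt ^^ (card A - 1)) L)"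
    using iter_Q[OF assms Q_triv[OF assms(2)]] .
  moreover have "card A + 1 - (card A - 1) = 2"
    using assms(1,3) unfolding strict_poset_def by (simp add: Suc_leI card_gt_0_iff)
  ultimately show ?thesis using Q2_linext[OF assms(1) iter_lab[OF assms]] by simp
qed

lemma linext_mono:
  assumes "strict_poset A lt" "L \<in> labelings A" "A \<noteq> {}" "is_linext A lt L"
  shows "is_linext A lt ((promotion A lt ^^ k) L)"
  using iter_Q[OF assms(1-3), of 0 k] assms(4) by (simp add: Q0)

lemma lt_conn_aux:
  assumes po: "strict_poset A lt"
  shows "\<forall>x y. x \<in> A \<longrightarrow> y \<in> A \<longrightarrow> lt x y \<longrightarrow> card {z\<in>A. lt x z \<and> lt z y} = m \<longrightarrow>
     (x, y) \<in> (covers A lt \<union> (covers A lt)\<inverse>)\<^sup>+"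
proof (induction m rule: less_induct)
  case (less m)
  have fin: "finite A" using po unfolding strict_poset_def by auto
  show ?case
  proof (intro allI impI)
    fix x y assume x: "x \<in> A" and y: "y \<in> A" and xy: "lt x y" and c: "card {z\<in>A. lt x z \<and> lt z y} = m"
    show "(x, y) \<in> (covers A lt \<union> (covers A lt)\<inverse>)\<^sup>+"
    proof (cases "\<exists>z\<in>A. lt x z \<and> lt z y")
      case False
      then have "(x, y) \<in> covers A lt" unfolding covers_def using x y xy by auto
      then show ?thesis by auto
    next
      case True
      then obtain z where z: "z \<in> A" "lt x z" "lt z y" by auto
      have trn: "\<And>a b c. a \<in> A \<Longrightarrow> b \<in> A \<Longrightarrow> c \<in> A \<Longrightarrow> lt a b \<Longrightarrow> lt b c \<Longrightarrow> lt a c"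
        using po unfolding strict_poset_def by blast
      have irr: "\<not> lt z z" using po z unfolding strict_poset_def by auto
      have sub1: "{w\<in>A. lt x w \<and> lt w z} \<subseteq> {z\<in>A. lt x z \<and> lt z y}"
      proof
        fix w assume "w \<in> {w\<in>A. lt x w \<and> lt w z}"
        then have "w \<in> A" "lt x w" "lt w z" by auto
        then show "w \<in> {z\<in>A. lt x z \<and> lt z y}" using trn[of w z y] z y by blast
      qed
      have sub2: "{w\<in>A. lt z w \<and> lt w y} \<subseteq> {z\<in>A. lt x z \<and> lt z y}"
      proof
        fix w assume "w \<in> {w\<in>A. lt z w \<and> lt w y}"
        then have "w \<in> A" "lt z w" "lt w y" by auto
        then show "w \<in> {z\<in>A. lt x z \<and> lt z y}" using trn[of x z w] z x by blast
      qed
      have zin: "z \<in> {z\<in>A. lt x z \<and> lt z y}" using z by blast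
      have s1: "{w\<in>A. lt x w \<and> lt w z} \<subset> {z\<in>A. lt x z \<and> lt z y}"
        using sub1 zin irr by blast
      have s2: "{w\<in>A. lt z w \<and> lt w y} \<subset> {z\<in>A. lt x z \<and> lt z y}"
        using sub2 zin irr by blast
      have "card {w\<in>A. lt x w \<and> lt w z} < m" using psubset_card_mono[OF _ s1] c fin by auto
      then have "(x, z) \<in> (covers A lt \<union> (covers A lt)\<inverse>)\<^sup>+" using less x z by blast
      moreover have "card {w\<in>A. lt z w \<and> lt w y} < m" using psubset_card_mono[OF _ s2] c fin by auto
      then have "(z, y) \<in> (covers A lt \<union> (covers A lt)\<inverse>)\<^sup>+" using less y z by blast
      ultimately show ?thesis by (rule trancl_trans)
    qed
  qed
qed

lemma lt_conn:
  assumes "strict_poset A lt" "x \<in> A" "y \<in> A" "lt x y"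
  shows "(x, y) \<in> hasse_connected A lt"
  using lt_conn_aux[OF assms(1)] assms unfolding hasse_connected_def by blast

lemma hc_sub: "hasse_connected A lt \<subseteq> A \<times> A"
proof -
  have "covers A lt \<union> (covers A lt)\<inverse> \<subseteq> A \<times> A" unfolding covers_def by auto
  then have "(covers A lt \<union> (covers A lt)\<inverse>)\<^sup>+ \<subseteq> A \<times> A" by (rule trancl_subset_Sigma)
  then show ?thesis unfolding hasse_connected_def by auto
qed

lemma hc_equiv: "equiv A (hasse_connected A lt)"
proof (rule equivI)
  show "hasse_connected A lt \<subseteq> A \<times> A" by (rule hc_sub)
  show "refl_on A (hasse_connected A lt)" unfolding refl_on_def hasse_connected_def by blast
  have "sym (covers A lt \<union> (covers A lt)\<inverse>)" by (rule symI) blast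
  then have sT: "sym ((covers A lt \<union> (covers A lt)\<inverse>)\<^sup>+)" by (rule sym_trancl)
  show "sym (hasse_connected A lt)"
  proof (rule symI)
    fix a b assume "(a, b) \<in> hasse_connected A lt"
    then have "(a, b) \<in> Id_on A \<or> (a, b) \<in> (covers A lt \<union> (covers A lt)\<inverse>)\<^sup>+"
      unfolding hasse_connected_def by blast
    then show "(b, a) \<in> hasse_connected A lt"
    proof
      assume "(a, b) \<in> Id_on A" then show ?thesis unfolding hasse_connected_def by blast
    next
      assume "(a, b) \<in> (covers A lt \<union> (covers A lt)\<inverse>)\<^sup>+"
      then have "(b, a) \<in> (covers A lt \<union> (covers A lt)\<inverse>)\<^sup>+" using symD[OF sT] by blast
      then show ?thesis unfolding hasse_connected_def by blast
    qed
  qed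
  show "trans (hasse_connected A lt)" unfolding trans_def
  proof (intro allI impI)
    fix a b c assume ab: "(a, b) \<in> hasse_connected A lt" and bc: "(b, c) \<in> hasse_connected A lt"
    show "(a, c) \<in> hasse_connected A lt"
    proof (cases "(a, b) \<in> Id_on A")
      case True then show ?thesis using bc by auto
    next
      case False
      then have ab': "(a, b) \<in> (covers A lt \<union> (covers A lt)\<inverse>)\<^sup>+" using ab unfolding hasse_connected_def by auto
      show ?thesis
      proof (cases "(b, c) \<in> Id_on A")
        case True then show ?thesis using ab by auto
      next
        case False
        then have "(b, c) \<in> (covers A lt \<union> (covers A lt)\<inverse>)\<^sup>+" using bc unfolding hasse_connected_def by auto
        then show ?thesis using ab' unfolding hasse_connected_def by (meson UnI2 trancl_trans)
      qed
    qed
  qed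
qed

lemma strict_poset_sub:
  assumes po: "strict_poset A lt" and CA: "C \<subseteq> A"
  shows "strict_poset C lt"
  unfolding strict_poset_def
proof (intro conjI)
  show "finite C" using po CA unfolding strict_poset_def by (auto intro: finite_subset)
  show "\<forall>x\<in>C. \<not> lt x x" using po CA unfolding strict_poset_def by blast
  show "\<forall>x\<in>C. \<forall>y\<in>C. \<forall>z\<in>C. lt x y \<longrightarrow> lt y z \<longrightarrow> lt x z"
  proof (intro ballI impI)
    fix a b c assume abc: "a \<in> C" "b \<in> C" "c \<in> C" "lt a b" "lt b c"
    have "a \<in> A" "b \<in> A" "c \<in> A" using abc(1-3) CA by auto
    then show "lt a c" using po abc(4,5) unfolding strict_poset_def by blast
  qed
qed

lemma comp_props:
  assumes po: "strict_poset A lt" and C: "C \<in> components A lt"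
  shows "C \<subseteq> A" "C \<noteq> {}" "\<And>z w. z \<in> C \<Longrightarrow> w \<in> A \<Longrightarrow> lt z w \<Longrightarrow> w \<in> C"
    "\<And>z w. z \<in> C \<Longrightarrow> w \<in> A \<Longrightarrow> lt w z \<Longrightarrow> w \<in> C" "strict_poset C lt"
proof -
  obtain x where x: "x \<in> A" "C = hasse_connected A lt `` {x}" using C unfolding components_def by (metis quotientE)
  have tr: "trans (hasse_connected A lt)" and sy: "sym (hasse_connected A lt)"
    using hc_equiv[of A lt] unfolding equiv_def by auto
  show CA: "C \<subseteq> A" using x(2) hc_sub[of A lt] by blast
  show "C \<noteq> {}" using equiv_class_self[OF hc_equiv x(1)] x(2) by auto
  show "\<And>z w. z \<in> C \<Longrightarrow> w \<in> A \<Longrightarrow> lt z w \<Longrightarrow> w \<in> C"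
  proof -
    fix z w assume zw: "z \<in> C" "w \<in> A" "lt z w"
    then have "(z, w) \<in> hasse_connected A lt" using lt_conn[OF po] CA by blast
    moreover have "(x, z) \<in> hasse_connected A lt" using zw x by blast
    ultimately have "(x, w) \<in> hasse_connected A lt" using transD[OF tr] by blast
    then show "w \<in> C" using x by blast
  qed
  show "\<And>z w. z \<in> C \<Longrightarrow> w \<in> A \<Longrightarrow> lt w z \<Longrightarrow> w \<in> C"
  proof -
    fix z w assume zw: "z \<in> C" "w \<in> A" "lt w z"
    then have "(w, z) \<in> hasse_connected A lt" using lt_conn[OF po] CA by blast
    then have "(z, w) \<in> hasse_connected A lt" using symD[OF sy] by blast
    moreover have "(x, z) \<in> hasse_connected A lt" using zw x by blast
    ultimately have "(x, w) \<in> hasse_connected A lt" using transD[OF tr] by blast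
    then show "w \<in> C" using x by blast
  qed
  show "strict_poset C lt" using strict_poset_sub[OF po CA] .
qed

lemma comp_of: 
  assumes "x \<in> A" "y \<in> A" "strict_poset A lt" "lt x y"
  shows "hasse_connected A lt `` {x} \<in> components A lt" "x \<in> hasse_connected A lt `` {x}"
    "y \<in> hasse_connected A lt `` {x}"
proof -
  show "hasse_connected A lt `` {x} \<in> components A lt" unfolding components_def using assms(1) by (rule quotientI)
  show "x \<in> hasse_connected A lt `` {x}" using equiv_class_self[OF hc_equiv assms(1)] .
  show "y \<in> hasse_connected A lt `` {x}" using lt_conn[OF assms(3,1,2,4)] by auto
qed



definition std :: "'a set \<Rightarrow> ('a \<Rightarrow> nat) \<Rightarrow> 'a \<Rightarrow> nat" where
  "std C L z = (if z \<in> C then card {w\<in>C. L w \<le> L z} else 0)"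

lemma std_less:
  assumes fin: "finite C" and inj: "inj_on L C" and z: "z1 \<in> C" "z2 \<in> C"
  shows "std C L z1 < std C L z2 \<longleftrightarrow> L z1 < L z2"
proof -
  have mono: "card {w\<in>C. L w \<le> L a} < card {w\<in>C. L w \<le> L b}" if "a \<in> C" "b \<in> C" "L a < L b" for a b
  proof -
    have "b \<in> {w\<in>C. L w \<le> L b}" "b \<notin> {w\<in>C. L w \<le> L a}" using that by auto
    moreover have "{w\<in>C. L w \<le> L a} \<subseteq> {w\<in>C. L w \<le> L b}" using that by auto
    ultimately have "{w\<in>C. L w \<le> L a} \<subset> {w\<in>C. L w \<le> L b}" by blast
    then show ?thesis using fin by (auto intro: psubset_card_mono)
  qed
  show ?thesis
  proof
    assume "L z1 < L z2" then show "std C L z1 < std C L z2" using mono z unfolding std_def by auto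
  next
    assume h: "std C L z1 < std C L z2"
    show "L z1 < L z2"
    proof (rule ccontr)
      assume "\<not> L z1 < L z2"
      then have "L z2 < L z1 \<or> L z2 = L z1" by auto
      then show False
      proof
        assume "L z2 < L z1" then show False using mono[OF z(2) z(1)] h z unfolding std_def by auto
      next
        assume "L z2 = L z1" then have "z1 = z2" using inj z by (metis inj_onD)
        then show False using h by auto
      qed
    qed
  qed
qed

lemma std_lab:
  assumes fin: "finite C" and inj: "inj_on L C"
  shows "std C L \<in> labelings C"
proof -
  have i: "inj_on (std C L) C"
  proof (rule inj_onI)
    fix a b assume ab: "a \<in> C" "b \<in> C" "std C L a = std C L b"
    then have "\<not> L a < L b" "\<not> L b < L a" using std_less[OF fin inj] by (metis less_irrefl)+
    then have "L a = L b" by auto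
    then show "a = b" using inj ab by (metis inj_onD)
  qed
  have r: "std C L ` C \<subseteq> {1..card C}"
  proof
    fix u assume "u \<in> std C L ` C"
    then obtain z where z: "z \<in> C" "u = std C L z" by auto
    have "z \<in> {w\<in>C. L w \<le> L z}" using z by auto
    then have "card {w\<in>C. L w \<le> L z} \<ge> 1" using fin by (metis (no_types, lifting) One_nat_def Suc_leI card_gt_0_iff empty_iff finite_subset mem_Collect_eq subsetI)
    moreover have "card {w\<in>C. L w \<le> L z} \<le> card C" using fin by (intro card_mono) auto
    ultimately show "u \<in> {1..card C}" using z unfolding std_def by auto
  qed
  show ?thesis using bij_by_card[OF fin i r] unfolding labelings_def std_def by auto
qed

lemma std_cong:
  assumes "\<forall>z1\<in>C. \<forall>z2\<in>C. L z1 < L z2 \<longleftrightarrow> L' z1 < L' z2"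
  shows "std C L = std C L'"
proof
  fix z show "std C L z = std C L' z"
  proof (cases "z \<in> C")
    case True
    have "{w\<in>C. L w \<le> L z} = {w\<in>C. L' w \<le> L' z}"
      using assms True by (auto simp: not_less[symmetric])
    then show ?thesis unfolding std_def by simp
  next
    case False then show ?thesis unfolding std_def by simp
  qed
qed

lemma std_self:
  assumes "s \<in> labelings C"
  shows "std C s = s"
proof
  fix z show "std C s z = s z"
  proof (cases "z \<in> C")
    case True
    have inj: "inj_on s C" and im: "s ` C = {1..card C}" using lab_facts[OF assms] by auto
    have "s ` {w\<in>C. s w \<le> s z} = {1..s z}"
    proof
      show "s ` {w\<in>C. s w \<le> s z} \<subseteq> {1..s z}" using im by force
      show "{1..s z} \<subseteq> s ` {w\<in>C. s w \<le> s z}"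
      proof
        fix u assume u: "u \<in> {1..s z}"
        have "s z \<le> card C" using im True by force
        then have "u \<in> s ` C" using im u by auto
        then show "u \<in> s ` {w\<in>C. s w \<le> s z}" using u by auto
      qed
    qed
    moreover have "inj_on s {w\<in>C. s w \<le> s z}" using inj by (rule inj_on_subset) auto
    ultimately have "card {w\<in>C. s w \<le> s z} = s z" by (metis card_atLeastAtMost card_image diff_Suc_1)
    then show ?thesis using True unfolding std_def by simp
  next
    case False then show ?thesis using lab_facts(3)[OF assms] unfolding std_def by simp
  qed
qed

context
  fixes A :: "'a set" and lt :: "'a \<Rightarrow> 'a \<Rightarrow> bool" and L :: "'a \<Rightarrow> nat" and C :: "'a set"
  assumes po: "strict_poset A lt" and lab: "L \<in> labelings A" and ne: "A \<noteq> {}"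
    and comp: "C \<in> components A lt"
begin

lemma CA: "C \<subseteq> A" using comp_props[OF po comp] by auto
lemma Cne: "C \<noteq> {}" using comp_props[OF po comp] by auto
lemma up: "z \<in> C \<Longrightarrow> w \<in> A \<Longrightarrow> lt z w \<Longrightarrow> w \<in> C" using comp_props[OF po comp] by blast
lemma down: "z \<in> C \<Longrightarrow> w \<in> A \<Longrightarrow> lt w z \<Longrightarrow> w \<in> C" using comp_props[OF po comp] by blast
lemma poC: "strict_poset C lt" using comp_props[OF po comp] by auto
lemma finC: "finite C" using poC unfolding strict_poset_def by auto
lemma injC: "inj_on L C" using lab_facts(1)[OF lab] CA by (rule inj_on_subset)

lemma chain_in_comp: "chain_start A L \<in> C \<Longrightarrow> y \<in> promo_chain A lt L \<Longrightarrow> y \<in> C"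
  using chain_above[OF po lab ne] chain_sub[OF po lab ne] up by blast

lemma comm_out:
  assumes s: "chain_start A L \<notin> C"
  shows "std C (promotion A lt L) = std C L"
proof (rule std_cong[symmetric], intro ballI)
  have nc: "z \<notin> promo_chain A lt L" if "z \<in> C" for z
  proof
    assume "z \<in> promo_chain A lt L"
    then have "z = chain_start A L \<or> lt (chain_start A L) z" by (rule chain_above[OF po lab ne])
    then show False using s that down start_facts(1)[OF po lab ne] by blast
  qed
  have pv: "promotion A lt L z = L z - 1" "L z \<ge> 1" if "z \<in> C" for z
    using pv_off[OF po lab ne _ nc[OF that]] that CA lab_range[OF lab] by auto
  fix z1 z2 assume "z1 \<in> C" "z2 \<in> C"
  then show "L z1 < L z2 \<longleftrightarrow> promotion A lt L z1 < promotion A lt L z2"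
    using pv[of z1] pv[of z2] by auto
qed

lemma comm_in:
  assumes s: "chain_start A L \<in> C"
  shows "std C (promotion A lt L) = promotion C lt (std C L)"
proof -
  let ?t = "std C L"
  have tl: "?t \<in> labelings C" using std_lab[OF finC injC] .
  have ord: "?t z1 < ?t z2 \<longleftrightarrow> L z1 < L z2" if "z1 \<in> C" "z2 \<in> C" for z1 z2
    using std_less[OF finC injC that] .
  have injt: "inj_on ?t C" using lab_facts(1)[OF tl] .
  have cs: "chain_start C ?t = chain_start A L"
  proof -
    let ?s = "chain_start A L"
    have "{w\<in>C. L w \<le> L ?s} = {?s}"
    proof
      show "{w\<in>C. L w \<le> L ?s} \<subseteq> {?s}"
      proof
        fix w assume "w \<in> {w\<in>C. L w \<le> L ?s}"
        then have "w \<in> A" "L w = 1" using CA lab_range[OF lab, of w] start_facts(2)[OF po lab ne] by auto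
        then show "w \<in> {?s}" using start_unique[OF po lab ne] by auto
      qed
      show "{?s} \<subseteq> {w\<in>C. L w \<le> L ?s}" using s by auto
    qed
    then have "?t ?s = 1" using s unfolding std_def by simp
    then show ?thesis using start_unique[OF poC tl Cne] s by auto
  qed
  have maxeq: "is_maximal C lt y \<longleftrightarrow> is_maximal A lt y" if "y \<in> C" for y
    using that CA up unfolding is_maximal_def by blast
  have lseq: "lsucc C lt ?t y = lsucc A lt L y" if y: "y \<in> C" "\<not> is_maximal A lt y" for y
  proof -
    let ?u = "lsucc A lt L y"
    have yA: "y \<in> A" using y CA by auto
    have u: "?u \<in> A" "lt y ?u" "\<And>z. z \<in> A \<Longrightarrow> lt y z \<Longrightarrow> L ?u \<le> L z"
      using lsucc_prop[OF po lab ne yA y(2)] by auto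
    have uC: "?u \<in> C" using up y u by blast
    show ?thesis unfolding lsucc_def[of C lt ?t y]
    proof (rule argmin_unique)
      show "?u \<in> C \<and> lt y ?u" using uC u by auto
      show "\<forall>w. w \<in> C \<and> lt y w \<longrightarrow> ?t ?u \<le> ?t w"
        using u(3) ord uC CA by (meson not_less subsetD)
      show "inj_on ?t {w. w \<in> C \<and> lt y w}" using injt by (rule inj_on_subset) auto
    qed
  qed
  have vv_eq: "(okk A lt L k \<longleftrightarrow> okk C lt ?t k) \<and> (okk A lt L k \<longrightarrow> vv C lt ?t k = vv A lt L k \<and> vv A lt L k \<in> C)" for k
  proof (induction k)
    case 0
    then show ?case using cs s by (simp add: okk_def vv_0)
  next
    case (Suc k)
    show ?case
    proof (cases "okk A lt L k")
      case True
      then have e: "vv C lt ?t k = vv A lt L k" "vv A lt L k \<in> C" "okk C lt ?t k" using Suc by auto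
      have o: "okk A lt L (Suc k) \<longleftrightarrow> okk C lt ?t (Suc k)" using e True maxeq by (simp add: okk_Suc)
      have "vv C lt ?t (Suc k) = vv A lt L (Suc k) \<and> vv A lt L (Suc k) \<in> C" if ok: "okk A lt L (Suc k)"
      proof -
        have nm: "\<not> is_maximal A lt (vv A lt L k)" using ok by (simp add: okk_Suc)
        have "vv C lt ?t (Suc k) = vv A lt L (Suc k)" using lseq[OF e(2) nm] e by (simp add: vv_Suc)
        moreover have "vv A lt L (Suc k) \<in> C" using chain_in[OF po lab ne ok] chain_mono[OF po lab ne ok, of k] up e(2) by blast
        ultimately show ?thesis by simp
      qed
      then show ?thesis using o by blast
    next
      case False
      then have "\<not> okk C lt ?t k" using Suc by auto
      then show ?thesis using False by (simp add: okk_Suc)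
    qed
  qed
  have ch: "promo_chain C lt ?t = promo_chain A lt L"
    unfolding promo_chain_alt using vv_eq by metis
  let ?P = "promo_chain A lt L"
  define sig where "sig y = (if y \<in> ?P then lsucc A lt L y else y)" for y
  have sigC: "sig y \<in> C" if "y \<in> C" "\<not> (y \<in> ?P \<and> is_maximal A lt y)" for y
    using that lsucc_prop(1,2)[OF po lab ne] up CA unfolding sig_def by (metis subsetD)
  have pA: "promotion A lt L y = L (sig y) - 1" if "y \<in> C" "\<not> (y \<in> ?P \<and> is_maximal A lt y)" for y
    using that pv_succ[OF po lab ne] pv_off[OF po lab ne] CA unfolding sig_def by auto
  have pC: "promotion C lt ?t y = ?t (sig y) - 1" if "y \<in> C" "\<not> (y \<in> ?P \<and> is_maximal A lt y)" for y
  proof (cases "y \<in> ?P")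
    case True
    then have nm: "\<not> is_maximal A lt y" using that by auto
    have "promotion C lt ?t y = ?t (lsucc C lt ?t y) - 1"
      using pv_succ[OF poC tl Cne, of y] True ch maxeq[OF that(1)] nm by auto
    then show ?thesis using lseq[OF that(1) nm] True unfolding sig_def by simp
  next
    case False
    then show ?thesis using pv_off[OF poC tl Cne that(1)] ch unfolding sig_def by auto
  qed
  have mA: "promotion A lt L y = card A" if "y \<in> C" "y \<in> ?P \<and> is_maximal A lt y" for y
    using pv_max[OF po lab ne] that by auto
  have mC: "promotion C lt ?t y = card C" if "y \<in> C" "y \<in> ?P \<and> is_maximal A lt y" for y
    using pv_max[OF poC tl Cne] that ch maxeq by auto
  have rA: "1 \<le> L (sig y) \<and> L (sig y) \<le> card A" if "y \<in> C" "\<not> (y \<in> ?P \<and> is_maximal A lt y)" for y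
    using sigC[OF that] CA lab_range[OF lab] by auto
  have rC: "1 \<le> ?t (sig y) \<and> ?t (sig y) \<le> card C" if "y \<in> C" "\<not> (y \<in> ?P \<and> is_maximal A lt y)" for y
    using sigC[OF that] lab_range[OF tl] by auto
  have cmp: "promotion A lt L z1 < promotion A lt L z2 \<longleftrightarrow> promotion C lt ?t z1 < promotion C lt ?t z2"
    if z: "z1 \<in> C" "z2 \<in> C" for z1 z2
  proof (cases "z1 \<in> ?P \<and> is_maximal A lt z1"; cases "z2 \<in> ?P \<and> is_maximal A lt z2")
    assume a: "z1 \<in> ?P \<and> is_maximal A lt z1" "z2 \<in> ?P \<and> is_maximal A lt z2"
    then show ?thesis using mA[OF z(1) a(1)] mA[OF z(2) a(2)] mC[OF z(1) a(1)] mC[OF z(2) a(2)] by simp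
  next
    assume a: "z1 \<in> ?P \<and> is_maximal A lt z1" "\<not> (z2 \<in> ?P \<and> is_maximal A lt z2)"
    then show ?thesis using mA[OF z(1) a(1)] mC[OF z(1) a(1)] pA[OF z(2) a(2)] pC[OF z(2) a(2)]
      rA[OF z(2) a(2)] rC[OF z(2) a(2)] by auto
  next
    assume a: "\<not> (z1 \<in> ?P \<and> is_maximal A lt z1)" "z2 \<in> ?P \<and> is_maximal A lt z2"
    then show ?thesis using mA[OF z(2) a(2)] mC[OF z(2) a(2)] pA[OF z(1) a(1)] pC[OF z(1) a(1)]
      rA[OF z(1) a(1)] rC[OF z(1) a(1)] by auto
  next
    assume a: "\<not> (z1 \<in> ?P \<and> is_maximal A lt z1)" "\<not> (z2 \<in> ?P \<and> is_maximal A lt z2)"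
    have "L (sig z1) < L (sig z2) \<longleftrightarrow> ?t (sig z1) < ?t (sig z2)"
      using ord[OF sigC[OF z(1) a(1)] sigC[OF z(2) a(2)]] by simp
    then show ?thesis using pA[OF z(1) a(1)] pC[OF z(1) a(1)] pA[OF z(2) a(2)] pC[OF z(2) a(2)]
      rA[OF z(1) a(1)] rC[OF z(1) a(1)] rA[OF z(2) a(2)] rC[OF z(2) a(2)] by auto
  qed
  have "std C (promotion A lt L) = std C (promotion C lt ?t)"
    using cmp by (intro std_cong) auto
  also have "\<dots> = promotion C lt ?t" using std_self[OF promotion_lab[OF poC tl Cne]] .
  finally show ?thesis .
qed

end



context
  fixes A :: "'a set" and lt :: "'a \<Rightarrow> 'a \<Rightarrow> bool" and C :: "'a set"
  assumes po: "strict_poset A lt" and ne: "A \<noteq> {}"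
    and comp: "C \<in> components A lt"
begin

lemma one_step_labels:
  assumes lab: "M \<in> labelings A" and l: "1 \<le> l" "l \<le> card A - 1"
  shows "l \<in> promotion A lt M ` C \<longleftrightarrow> Suc l \<in> M ` C"
proof
  have CA: "C \<subseteq> A" using comp_props[OF po comp] by auto
  assume "l \<in> promotion A lt M ` C"
  then obtain z where z: "z \<in> C" "promotion A lt M z = l" by auto
  have zA: "z \<in> A" using z CA by auto
  have nm: "\<not> (z \<in> promo_chain A lt M \<and> is_maximal A lt z)"
    using pv_max[OF po lab ne] z l by fastforce
  show "Suc l \<in> M ` C"
  proof (cases "z \<in> promo_chain A lt M")
    case True
    then have nm': "\<not> is_maximal A lt z" using nm by auto
    have u: "lsucc A lt M z \<in> A" "lt z (lsucc A lt M z)" using lsucc_prop[OF po lab ne zA nm'] by auto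
    have "lsucc A lt M z \<in> C" using comp_props(3)[OF po comp z(1) u(1) u(2)] .
    moreover have "M (lsucc A lt M z) = Suc l" using pv_succ[OF po lab ne True nm'] z l by auto
    ultimately show ?thesis by (metis image_eqI)
  next
    case False
    then have "M z = Suc l" using pv_off[OF po lab ne zA] z l by auto
    then show ?thesis using z by (metis image_eqI)
  qed
next
  have CA: "C \<subseteq> A" using comp_props[OF po comp] by auto
  assume "Suc l \<in> M ` C"
  then obtain w where w: "w \<in> C" "M w = Suc l" by auto
  have wA: "w \<in> A" using w CA by auto
  have ws: "w \<noteq> chain_start A M" using start_facts(2)[OF po lab ne] w l by auto
  show "l \<in> promotion A lt M ` C"
  proof (cases "w \<in> promo_chain A lt M")
    case True
    then obtain z where z: "z \<in> promo_chain A lt M" "\<not> is_maximal A lt z" "lsucc A lt M z = w"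
      using chain_pred[OF po lab ne True ws] by auto
    have zA: "z \<in> A" using chain_sub[OF po lab ne z(1)] .
    have "lt z w" using lsucc_prop(2)[OF po lab ne zA z(2)] z(3) by simp
    then have zC: "z \<in> C" using comp_props(4)[OF po comp w(1) zA] by simp
    have "promotion A lt M z = l" using pv_succ[OF po lab ne z(1) z(2)] z(3) w by simp
    then show ?thesis using zC by (metis image_eqI)
  next
    case False
    then have "promotion A lt M w = l" using pv_off[OF po lab ne wA] w by simp
    then show ?thesis using w by (metis image_eqI)
  qed
qed

lemma iter_labels:
  assumes lab: "L \<in> labelings A"
  shows "1 \<le> l \<Longrightarrow> l + k \<le> card A \<Longrightarrow> (l \<in> (promotion A lt ^^ k) L ` C \<longleftrightarrow> l + k \<in> L ` C)"
proof (induction k arbitrary: l)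
  case 0 then show ?case by simp
next
  case (Suc k)
  have "l \<in> (promotion A lt ^^ Suc k) L ` C \<longleftrightarrow> Suc l \<in> (promotion A lt ^^ k) L ` C"
    using one_step_labels[OF iter_lab[OF po lab ne], of l k] Suc.prems by simp
  also have "\<dots> \<longleftrightarrow> Suc l + k \<in> L ` C" using Suc.IH[of "Suc l"] Suc.prems by simp
  finally show ?case by simp
qed

lemma start_C_iff:
  assumes lab: "M \<in> labelings A"
  shows "chain_start A M \<in> C \<longleftrightarrow> 1 \<in> M ` C"
proof
  assume "chain_start A M \<in> C" then show "1 \<in> M ` C" using start_facts(2)[OF po lab ne] by (metis image_eqI)
next
  have CA: "C \<subseteq> A" using comp_props[OF po comp] by auto
  assume "1 \<in> M ` C"
  then obtain z where "z \<in> C" "M z = 1" by auto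
  then show "chain_start A M \<in> C" using start_unique[OF po lab ne] CA by auto
qed

definition cnt :: "('a \<Rightarrow> nat) \<Rightarrow> nat \<Rightarrow> nat" where
  "cnt L k = card {j. j < k \<and> chain_start A ((promotion A lt ^^ j) L) \<in> C}"

lemma std_iter:
  assumes lab: "L \<in> labelings A"
  shows "std C ((promotion A lt ^^ k) L) = (promotion C lt ^^ cnt L k) (std C L)"
proof (induction k)
  case 0 then show ?case by (simp add: cnt_def)
next
  case (Suc k)
  let ?M = "(promotion A lt ^^ k) L"
  have Ml: "?M \<in> labelings A" using iter_lab[OF po lab ne] .
  have set: "{j. j < Suc k \<and> chain_start A ((promotion A lt ^^ j) L) \<in> C} =
     {j. j < k \<and> chain_start A ((promotion A lt ^^ j) L) \<in> C} \<union> (if chain_start A ?M \<in> C then {k} else {})"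
    by (auto simp: less_Suc_eq)
  show ?case
  proof (cases "chain_start A ?M \<in> C")
    case True
    then have "cnt L (Suc k) = Suc (cnt L k)" unfolding cnt_def set by simp
    moreover have "std C ((promotion A lt ^^ Suc k) L) = promotion C lt (std C ?M)"
      using comm_in[OF po Ml ne comp True] by simp
    ultimately show ?thesis using Suc.IH by simp
  next
    case False
    then have "cnt L (Suc k) = cnt L k" unfolding cnt_def set by simp
    moreover have "std C ((promotion A lt ^^ Suc k) L) = std C ?M"
      using comm_out[OF po Ml ne comp False] by simp
    ultimately show ?thesis using Suc.IH by simp
  qed
qed

lemma cnt_eq:
  assumes lab: "L \<in> labelings A" and k: "k \<le> card A"
  shows "cnt L k = card {j. j < k \<and> Suc j \<in> L ` C}"
proof -
  have "{j. j < k \<and> chain_start A ((promotion A lt ^^ j) L) \<in> C} = {j. j < k \<and> Suc j \<in> L ` C}"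
  proof (rule Collect_cong)
    fix j
    show "(j < k \<and> chain_start A ((promotion A lt ^^ j) L) \<in> C) = (j < k \<and> Suc j \<in> L ` C)"
      using start_C_iff[OF iter_lab[OF po lab ne, of j]] iter_labels[OF lab, of 1 j] k by auto
  qed
  then show ?thesis unfolding cnt_def by simp
qed

end



definition Bset :: "'a set \<Rightarrow> ('a \<Rightarrow> 'a \<Rightarrow> bool) \<Rightarrow> 'a set \<Rightarrow> ('a \<Rightarrow> nat) set" where
  "Bset A lt C = {L \<in> labelings A. (\<forall>z\<in>A. card A - 1 \<le> L z \<longrightarrow> z \<in> C) \<and> std C L \<in> tangled_labelings C lt}"

lemma tangled_comp:
  assumes po: "strict_poset A lt" and n2: "card A \<ge> 2" and T: "L \<in> tangled_labelings A lt"
  shows "\<exists>C \<in> components A lt. L \<in> Bset A lt C"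
proof -
  let ?n = "card A" and ?pm = "promotion A lt"
  have lab: "L \<in> labelings A" and tg: "tangled A lt L" using T unfolding tangled_labelings_def by auto
  have finA: "finite A" using po unfolding strict_poset_def by auto
  have ne: "A \<noteq> {}" using n2 by auto
  define M where "M = (?pm ^^ (?n - 2)) L"
  have Ml: "M \<in> labelings A" unfolding M_def using iter_lab[OF po lab ne] .
  have nl: "\<not> is_linext A lt M" using tg n2 unfolding tangled_def M_def by auto
  have Q3: "Qp A lt 3 M"
  proof -
    have "Qp A lt (?n + 1 - (?n - 2)) M" unfolding M_def using iter_Q[OF po lab ne Q_triv[OF lab]] .
    moreover have "?n + 1 - (?n - 2) = 3" using n2 by auto
    ultimately show ?thesis by simp
  qed
  obtain x y where xy: "x \<in> A" "y \<in> A" "lt x y" "\<not> M x < M y" using nl unfolding is_linext_def by auto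
  have Mx2: "M x \<le> 2" using Q3 xy unfolding Qp_def by force
  have "x \<noteq> y" using xy po unfolding strict_poset_def by auto
  then have "M x \<noteq> M y" using lab_facts(1)[OF Ml] xy by (meson inj_onD)
  then have Mxy: "M x = 2" "M y = 1" using Mx2 xy(4) lab_range[OF Ml xy(1)] lab_range[OF Ml xy(2)] by auto
  define C where "C = hasse_connected A lt `` {x}"
  have comp: "C \<in> components A lt" and xC: "x \<in> C" and yC: "y \<in> C"
    using comp_of[OF xy(1,2) po xy(3)] unfolding C_def by auto
  have CA: "C \<subseteq> A" and poC: "strict_poset C lt" and Cne: "C \<noteq> {}" using comp_props[OF po comp] by auto
  have finC: "finite C" using finite_subset[OF CA finA] .
  have injC: "inj_on L C" using lab_facts(1)[OF lab] CA by (rule inj_on_subset)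
  have l1: "?n - 1 \<in> L ` C"
  proof -
    have "1 \<in> M ` C" using yC Mxy by (metis image_eqI)
    moreover have "1 + (?n - 2) = ?n - 1" using n2 by auto
    ultimately show ?thesis using iter_labels[OF po ne comp lab, of 1 "?n - 2"] n2 unfolding M_def[symmetric] by auto
  qed
  have l2: "?n \<in> L ` C"
  proof -
    have "2 \<in> M ` C" using xC Mxy by (metis image_eqI)
    moreover have "2 + (?n - 2) = ?n" using n2 by auto
    moreover have "2 \<in> M ` C \<longleftrightarrow> 2 + (?n - 2) \<in> L ` C"
      using iter_labels[OF po ne comp lab, of 2 "?n - 2"] n2 unfolding M_def[symmetric] by simp
    ultimately show ?thesis by simp
  qed
  have top: "\<forall>z\<in>A. ?n - 1 \<le> L z \<longrightarrow> z \<in> C"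
  proof (intro ballI impI)
    fix z assume z: "z \<in> A" "?n - 1 \<le> L z"
    then have "L z = ?n - 1 \<or> L z = ?n" using lab_range[OF lab z(1)] by auto
    then obtain a where a: "a \<in> C" "L a = L z" using l1 l2 by (metis imageE)
    then have "a = z" using lab_facts(1)[OF lab] CA z(1) by (meson inj_onD subsetD)
    then show "z \<in> C" using a by simp
  qed
  let ?t = "std C L"
  have tl: "?t \<in> labelings C" using std_lab[OF finC injC] .
  have cC2: "card C \<ge> 2"
  proof -
    have "{x, y} \<subseteq> C" using xC yC by auto
    then have "card {x, y} \<le> card C" using finC by (rule card_mono[rotated])
    then show ?thesis using \<open>x \<noteq> y\<close> by auto
  qed
  have cnt: "cnt A lt C L (?n - 2) = card C - 2"
  proof -
    have "cnt A lt C L (?n - 2) = card {j. j < ?n - 2 \<and> Suc j \<in> L ` C}"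
      using cnt_eq[OF po ne comp lab] by auto
    also have "\<dots> = card (Suc ` {j. j < ?n - 2 \<and> Suc j \<in> L ` C})" by (simp add: card_image)
    also have "Suc ` {j. j < ?n - 2 \<and> Suc j \<in> L ` C} = L ` C - {?n - 1, ?n}"
    proof
      show "Suc ` {j. j < ?n - 2 \<and> Suc j \<in> L ` C} \<subseteq> L ` C - {?n - 1, ?n}" by auto
      show "L ` C - {?n - 1, ?n} \<subseteq> Suc ` {j. j < ?n - 2 \<and> Suc j \<in> L ` C}"
      proof
        fix u assume u: "u \<in> L ` C - {?n - 1, ?n}"
        then have "1 \<le> u" "u \<le> ?n" using lab_range[OF lab] CA by auto
        then have "u = Suc (u - 1)" "u - 1 < ?n - 2" using u by auto
        moreover have "Suc (u - 1) \<in> L ` C" using u \<open>u = Suc (u - 1)\<close> by simp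
        ultimately show "u \<in> Suc ` {j. j < ?n - 2 \<and> Suc j \<in> L ` C}" by (intro rev_image_eqI[of "u - 1"]) auto
      qed
    qed
    also have "card (L ` C - {?n - 1, ?n}) = card (L ` C) - 2"
    proof -
      have "{?n - 1, ?n} \<subseteq> L ` C" using l1 l2 by auto
      moreover have "card {?n - 1, ?n} = 2" using n2 by auto
      ultimately show ?thesis using finC by (simp add: card_Diff_subset)
    qed
    also have "card (L ` C) = card C" using injC by (simp add: card_image)
    finally show ?thesis .
  qed
  have stdM: "std C M = (promotion C lt ^^ (card C - 2)) ?t"
    using std_iter[OF po ne comp lab, of "?n - 2"] cnt unfolding M_def by simp
  have nlC: "\<not> is_linext C lt ((promotion C lt ^^ (card C - 2)) ?t)"
  proof
    assume "is_linext C lt ((promotion C lt ^^ (card C - 2)) ?t)"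
    then have "std C M x < std C M y" using xC yC xy(3) unfolding stdM is_linext_def by auto
    then have "M x < M y"
      using std_less[OF finC inj_on_subset[OF lab_facts(1)[OF Ml] CA] xC yC] by simp
    then show False using xy(4) by simp
  qed
  have "tangled C lt ?t" unfolding tangled_def
  proof
    show "is_linext C lt ((promotion C lt ^^ (card C - 1)) ?t)" using sorting_thm[OF poC tl Cne] .
    show "\<forall>k<card C - 1. \<not> is_linext C lt ((promotion C lt ^^ k) ?t)"
    proof (intro allI impI notI)
      fix k assume k: "k < card C - 1" and li: "is_linext C lt ((promotion C lt ^^ k) ?t)"
      have "is_linext C lt ((promotion C lt ^^ (card C - 2 - k)) ((promotion C lt ^^ k) ?t))"
        using linext_mono[OF poC iter_lab[OF poC tl Cne] Cne li] .
      moreover have "(promotion C lt ^^ (card C - 2 - k)) ((promotion C lt ^^ k) ?t) = (promotion C lt ^^ (card C - 2)) ?t"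
      proof -
        have e: "card C - 2 - k + k = card C - 2" using k by auto
        have "(promotion C lt ^^ (card C - 2 - k + k)) ?t = (promotion C lt ^^ (card C - 2 - k)) ((promotion C lt ^^ k) ?t)"
          by (simp only: funpow_add comp_apply)
        then show ?thesis using e by simp
      qed
      ultimately show False using nlC by simp
    qed
  qed
  then have "?t \<in> tangled_labelings C lt" using tl unfolding tangled_labelings_def by auto
  then show ?thesis using comp lab top unfolding Bset_def by auto
qed



lemma ff_lemma: "k \<le> N \<Longrightarrow> fact (N - k) * (\<Prod>i\<in>{0..<k}. N - i) = (fact N :: nat)"
proof (induction k)
  case 0 then show ?case by simp
next
  case (Suc k)
  have e: "N - k = Suc (N - Suc k)" using Suc.prems by auto
  have "fact (N - Suc k) * (\<Prod>i\<in>{0..<Suc k}. N - i) = fact (N - Suc k) * (N - k) * (\<Prod>i\<in>{0..<k}. N - i)"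
    by (simp add: prod.atLeast0_lessThan_Suc)
  also have "fact (N - Suc k) * (N - k) = (fact (N - k) :: nat)" using e by (simp add: fact_Suc)
  finally show ?case using Suc by simp
qed

lemma labelings_finite:
  assumes "finite A" shows "finite (labelings A)"
proof -
  have i: "inj_on (\<lambda>L. restrict L A) (labelings A)"
  proof (rule inj_onI)
    fix L L' assume a: "L \<in> labelings A" "L' \<in> labelings A" "restrict L A = restrict L' A"
    show "L = L'"
    proof
      fix x show "L x = L' x"
      proof (cases "x \<in> A")
        case True then show ?thesis using fun_cong[OF a(3), of x] by simp
      next
        case False then show ?thesis using lab_facts(3)[OF a(1)] lab_facts(3)[OF a(2)] by simp
      qed
    qed
  qed
  have "(\<lambda>L. restrict L A) ` labelings A \<subseteq> A \<rightarrow>\<^sub>E {1..card A}"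
    unfolding labelings_def bij_betw_def by auto
  moreover have "finite (A \<rightarrow>\<^sub>E {1..card A})" using assms by (simp add: finite_PiE)
  ultimately have "finite ((\<lambda>L. restrict L A) ` labelings A)" by (rule finite_subset)
  then show ?thesis using i by (rule finite_imageD)
qed

lemma Bset_bound:
  assumes po: "strict_poset A lt" and n2: "card A \<ge> 2" and comp: "C \<in> components A lt"
    and hyp: "card (tangled_labelings C lt) \<le> fact (card C - 1)"
  shows "card (Bset A lt C) \<le> (card C - 1) * fact (card A - 2)"
proof -
  let ?n = "card A"
  have finA: "finite A" using po unfolding strict_poset_def by auto
  have CA: "C \<subseteq> A" and poC: "strict_poset C lt" using comp_props[OF po comp] by auto
  have finC: "finite C" using finite_subset[OF CA finA] .
  have top2: "card C \<ge> 2" if "L \<in> Bset A lt C" for L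
  proof -
    have lab: "L \<in> labelings A" and tp: "\<forall>z\<in>A. ?n - 1 \<le> L z \<longrightarrow> z \<in> C"
      using that unfolding Bset_def by blast+
    have im: "L ` A = {1..?n}" using lab_facts(2)[OF lab] .
    have "?n - 1 \<in> {1..?n}" "?n \<in> {1..?n}" using n2 by auto
    then have "?n - 1 \<in> L ` A" "?n \<in> L ` A" using im by simp_all
    then obtain a b where ab: "a \<in> A" "?n - 1 = L a" "b \<in> A" "?n = L b" by blast
    have "a \<noteq> b" using ab n2 by auto
    moreover have "a \<in> C" using tp ab(1,2) by (metis order_refl)
    moreover have "b \<in> C" using tp ab(3,4) by (metis diff_le_self)
    ultimately have "{a, b} \<subseteq> C" "card {a, b} = 2" by auto
    moreover have "card {a, b} \<le> card C" using card_mono[OF finC \<open>{a, b} \<subseteq> C\<close>] .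
    ultimately show ?thesis by simp
  qed
  show ?thesis
  proof (cases "card C \<ge> 2")
    case False
    then have "Bset A lt C = {}" using top2 by auto
    then show ?thesis by simp
  next
    case cC: True
    define F where "F = {g \<in> (A - C) \<rightarrow>\<^sub>E {1..?n - 2}. inj_on g (A - C)}"
    define T where "T = tangled_labelings C lt"
    define f where "f L = (std C L, restrict L (A - C))" for L :: "'a \<Rightarrow> nat"
    have finT: "finite T" unfolding T_def tangled_labelings_def
      using labelings_finite[OF finC] by auto
    have finF: "finite F" unfolding F_def using finA by (auto simp: finite_PiE)
    have img: "f ` Bset A lt C \<subseteq> T \<times> F"
    proof
      fix p assume "p \<in> f ` Bset A lt C"
      then obtain L where L: "L \<in> Bset A lt C" "p = f L" by auto
      have lab: "L \<in> labelings A" and tp: "\<forall>z\<in>A. ?n - 1 \<le> L z \<longrightarrow> z \<in> C"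
        and st: "std C L \<in> T" using L unfolding Bset_def T_def by auto
      have "restrict L (A - C) \<in> (A - C) \<rightarrow>\<^sub>E {1..?n - 2}"
      proof
        fix z assume z: "z \<in> A - C"
        then have zA: "z \<in> A" "z \<notin> C" by auto
        then have "\<not> ?n - 1 \<le> L z" using tp by blast
        then have "L z < ?n - 1" "1 \<le> L z" using lab_range[OF lab zA(1)] by auto
        then show "restrict L (A - C) z \<in> {1..?n - 2}" using z by auto
      qed auto
      moreover have "inj_on (restrict L (A - C)) (A - C)"
        using lab_facts(1)[OF lab] by (simp add: inj_on_def)
      ultimately show "p \<in> T \<times> F" using L st unfolding f_def F_def by auto
    qed
    have inj: "inj_on f (Bset A lt C)"
    proof (rule inj_onI)
      fix L1 L2 assume L1: "L1 \<in> Bset A lt C" and L2: "L2 \<in> Bset A lt C" and e: "f L1 = f L2"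
      have lab1: "L1 \<in> labelings A" and lab2: "L2 \<in> labelings A" using L1 L2 unfolding Bset_def by auto
      have es: "std C L1 = std C L2" and er: "restrict L1 (A - C) = restrict L2 (A - C)" using e unfolding f_def by auto
      have eo: "L1 z = L2 z" if "z \<in> A - C" for z using er that by (metis restrict_apply')
      have imC: "L ` C = {1..?n} - L ` (A - C)" if "L \<in> labelings A" for L
      proof -
        have im: "L ` A = {1..?n}" and ij: "inj_on L A" using lab_facts[OF that] by auto
        show ?thesis
        proof
          show "L ` C \<subseteq> {1..?n} - L ` (A - C)"
          proof
            fix u assume "u \<in> L ` C"
            then obtain c where c: "c \<in> C" "u = L c" by auto
            have "c \<in> A" using c CA by auto
            then have "L c \<in> L ` A" by (rule imageI)
            then have "u \<in> {1..?n}" using c im by simp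
            moreover have "u \<notin> L ` (A - C)"
            proof
              assume "u \<in> L ` (A - C)"
              then obtain d where d: "d \<in> A - C" "u = L d" by auto
              then have "c = d" using ij c CA by (metis DiffD1 inj_onD subsetD)
              then show False using c d by auto
            qed
            ultimately show "u \<in> {1..?n} - L ` (A - C)" by simp
          qed
          show "{1..?n} - L ` (A - C) \<subseteq> L ` C"
          proof
            fix u assume u: "u \<in> {1..?n} - L ` (A - C)"
            then obtain a where a: "a \<in> A" "u = L a" using im by (metis DiffD1 imageE)
            then have "a \<in> C" using u by auto
            then show "u \<in> L ` C" using a by simp
          qed
        qed
      qed
      have "L1 ` (A - C) = L2 ` (A - C)" using eo by (rule image_cong[OF refl])
      then have S: "L1 ` C = L2 ` C" using imC[OF lab1] imC[OF lab2] by simp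
      have cardS: "std C L z = card {u \<in> L ` C. u \<le> L z}" if "L \<in> labelings A" "z \<in> C" for L z
      proof -
        have "{w\<in>C. L w \<le> L z} \<subseteq> A" using CA by auto
        then have "inj_on L {w\<in>C. L w \<le> L z}" using lab_facts(1)[OF that(1)] by (rule inj_on_subset[rotated])
        then have "card {w\<in>C. L w \<le> L z} = card (L ` {w\<in>C. L w \<le> L z})" by (simp add: card_image)
        moreover have "L ` {w\<in>C. L w \<le> L z} = {u \<in> L ` C. u \<le> L z}" by auto
        ultimately show ?thesis using that unfolding std_def by simp
      qed
      have lessc: "card {u \<in> L1 ` C. u \<le> a} < card {u \<in> L1 ` C. u \<le> b}" if "a < b" "b \<in> L1 ` C" for a b
      proof -
        have "b \<in> {u \<in> L1 ` C. u \<le> b}" "b \<notin> {u \<in> L1 ` C. u \<le> a}" using that by auto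
        moreover have "{u \<in> L1 ` C. u \<le> a} \<subseteq> {u \<in> L1 ` C. u \<le> b}" using that by auto
        ultimately have "{u \<in> L1 ` C. u \<le> a} \<subset> {u \<in> L1 ` C. u \<le> b}" by blast
        moreover have "finite {u \<in> L1 ` C. u \<le> b}" using finC by simp
        ultimately show ?thesis using psubset_card_mono by blast
      qed
      show "L1 = L2"
      proof
        fix z
        show "L1 z = L2 z"
        proof (cases "z \<in> A")
          case False then show ?thesis using lab_facts(3)[OF lab1] lab_facts(3)[OF lab2] by simp
        next
          case zA: True
          show ?thesis
          proof (cases "z \<in> C")
            case False then show ?thesis using eo zA by auto
          next
            case zC: True
            have c1: "std C L1 z = card {u \<in> L1 ` C. u \<le> L1 z}" using cardS[OF lab1 zC] .
            have c2: "std C L1 z = card {u \<in> L1 ` C. u \<le> L2 z}" using cardS[OF lab2 zC] es S by simp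
            have m1: "L1 z \<in> L1 ` C" "L2 z \<in> L1 ` C" using zC S by auto
            show ?thesis
            proof (rule ccontr)
              assume "L1 z \<noteq> L2 z"
              then have "L1 z < L2 z \<or> L2 z < L1 z" by auto
              then show False using lessc[of "L1 z" "L2 z"] lessc[of "L2 z" "L1 z"] m1 c1 c2 by auto
            qed
          qed
        qed
      qed
    qed
    have "card (Bset A lt C) \<le> card (T \<times> F)"
      using card_inj_on_le[OF inj img finite_cartesian_product[OF finT finF]] .
    also have "\<dots> = card T * card F" by (rule card_cartesian_product)
    also have "card F = (\<Prod>i\<in>{0..<?n - card C}. (?n - 2) - i)"
    proof -
      have "card F = card {1..?n - 2} ^ (card (A - C) - card (A - C)) * prod ((-) (card {1..?n - 2})) {0..<card (A - C)}"
        unfolding F_def using card_inj_on_subset_funcset[of "A - C" "{1..?n - 2}" "A - C"] finA by auto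
      moreover have "card (A - C) = ?n - card C" using CA finC by (simp add: card_Diff_subset)
      ultimately show ?thesis by simp
    qed
    also have "card T * (\<Prod>i\<in>{0..<?n - card C}. (?n - 2) - i) \<le> fact (card C - 1) * (\<Prod>i\<in>{0..<?n - card C}. (?n - 2) - i)"
      using hyp unfolding T_def by (rule mult_right_mono) simp
    also have "\<dots> = (card C - 1) * fact (?n - 2)"
    proof -
      have cle: "card C \<le> ?n" using CA finA by (rule card_mono[rotated])
      have k: "?n - card C \<le> ?n - 2" using cC by auto
      have "(?n - 2) - (?n - card C) = card C - 2" using cC cle by auto
      then have "fact (card C - 2) * (\<Prod>i\<in>{0..<?n - card C}. (?n - 2) - i) = (fact (?n - 2) :: nat)"
        using ff_lemma[OF k] by simp
      moreover have "fact (card C - 1) = (card C - 1) * (fact (card C - 2) :: nat)"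
      proof -
        have "card C - 1 = Suc (card C - 2)" using cC by auto
        then show ?thesis by (simp only: fact_Suc) simp
      qed
      ultimately show ?thesis by (simp add: mult.assoc)
    qed
    finally show ?thesis .
  qed
qed



theorem mainTheorem11:
  fixes A :: "'a set" and lt :: "'a \<Rightarrow> 'a \<Rightarrow> bool"
  assumes "strict_poset A lt"
    and "card A \<ge> 2"
    and "\<forall>C \<in> components A lt. card (tangled_labelings C lt) \<le> fact (card C - 1)"
  shows "card (tangled_labelings A lt) \<le> (card A - card (components A lt)) * fact (card A - 2)"
proof -
  note po = assms(1) and n2 = assms(2) and hyp = assms(3)
  let ?n = "card A" and ?K = "components A lt"
  have finA: "finite A" using po unfolding strict_poset_def by auto
  have finK: "finite ?K" unfolding components_def using finite_quotient[OF finA hc_sub] .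
  have sub: "tangled_labelings A lt \<subseteq> (\<Union>C\<in>?K. Bset A lt C)"
    using tangled_comp[OF po n2] by blast
  have finL: "finite (labelings A)" using labelings_finite[OF finA] .
  have finU: "finite (\<Union>C\<in>?K. Bset A lt C)"
  proof (rule finite_subset[OF _ finL])
    show "(\<Union>C\<in>?K. Bset A lt C) \<subseteq> labelings A" unfolding Bset_def by blast
  qed
  have "card (tangled_labelings A lt) \<le> card (\<Union>C\<in>?K. Bset A lt C)"
    using card_mono[OF finU sub] .
  also have "\<dots> \<le> (\<Sum>C\<in>?K. card (Bset A lt C))" using card_UN_le[OF finK] .
  also have "\<dots> \<le> (\<Sum>C\<in>?K. (card C - 1) * fact (?n - 2))"
  proof (rule sum_mono)
    fix C assume C: "C \<in> ?K"
    show "card (Bset A lt C) \<le> (card C - 1) * fact (?n - 2)"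
      using Bset_bound[OF po n2 C] hyp C by blast
  qed
  also have "\<dots> = (\<Sum>C\<in>?K. card C - 1) * fact (?n - 2)" by (simp add: sum_distrib_right)
  also have "(\<Sum>C\<in>?K. card C - 1) = ?n - card ?K"
  proof -
    have ge1: "card C \<ge> 1" if "C \<in> ?K" for C
    proof -
      have "C \<subseteq> A" "C \<noteq> {}" using comp_props[OF po that] by auto
      then show ?thesis using finite_subset[OF \<open>C \<subseteq> A\<close> finA] by (simp add: Suc_le_eq card_gt_0_iff)
    qed
    have "(\<Sum>C\<in>?K. card C - 1 + 1) = (\<Sum>C\<in>?K. card C - 1) + (\<Sum>C\<in>?K. (1::nat))"
      by (rule sum.distrib)
    then have "(\<Sum>C\<in>?K. card C - 1) + card ?K = (\<Sum>C\<in>?K. card C - 1 + 1)" by simp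
    also have "\<dots> = (\<Sum>C\<in>?K. card C)" proof (rule sum.cong[OF refl])
      fix C assume "C \<in> ?K" then show "card C - 1 + 1 = card C" using ge1[of C] by simp
    qed
    also have "\<dots> = card (\<Union>?K)"
    proof (rule card_Union_disjoint[symmetric])
      show "pairwise disjnt ?K" unfolding components_def pairwise_def disjnt_def
        using quotient_disj[OF hc_equiv] by blast
      fix C assume "C \<in> ?K"
      then have "C \<subseteq> A" using comp_props[OF po] by blast
      then show "finite C" using finA by (rule finite_subset)
    qed
    also have "\<Union>?K = A" unfolding components_def using Union_quotient[OF hc_equiv] .
    finally show ?thesis by simp
  qed
  finally show ?thesis .
qed


end
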